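(* Let $\alpha(s)$ be an arc-length parametrized curve in $\mathbb{R}^3$ whose curvature $\kappa(s)$ is nonconstant (and nonvanishing) and satisfies $$5(\kappa')^2=c_2-\frac{2c_1}{\kappa}+\kappa^4$$ for some real constants $c_1,c_2$, and whose torsion $\tau(s)$ is nonconstant and satisfies $$\kappa^{(4)}-15\kappa(\kappa')^2-10\kappa^2\kappa''+\kappa^5-\tau^2\left(\kappa''-2\kappa^3\right)=0.$$ Let $N(s)$ be the principal unit normal of $\alpha$ and let $S$ be the ruled surface in $\mathbb{R}^3$ locally parametrized by $x(s,t)=\alpha(s)+tN(s)$, with the induced metric. Then $\alpha(s)$ is a triharmonic curve in $S$ with nonconstant geodesic curvature $\kappa_g(s)=\kappa(s)$.
   Context: An arc-length parametrized curve $\gamma$ in a Riemannian manifold $M$ with Levi-Civita connection $\nabla$, curvature tensor $R^M(X,Y)=\nabla_X\nabla_Y-\nabla_Y\nabla_X-\nabla_{[X,Y]}$ and $T=\gamma'$ is called triharmonic if $\nabla_T^5T+R^M(\nabla_T^3T,T)T-R^M(\nabla_T^2T,\nabla_TT)T=0$. For a curve in a surface, the geodesic curvature $\kappa_g$ is defined by $\nabla_TT=\kappa_g\,JT$, with $J$ the rotation by $\pi/2$ (the orientation of $S$ being chosen appropriately). The curvature and torsion of a curve in $\mathbb{R}^3$ are those of its Frenet frame $T=\alpha'$, $N=\alpha''/\kappa$, $B=T\times N$. *)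

theory Defs
  imports "HOL-Analysis.Analysis"
begin

definition vd :: "(real \<Rightarrow> 'a::real_normed_vector) \<Rightarrow> real \<Rightarrow> 'a" where
  "vd f s = vector_derivative f (at s)"

definition smooth_curve_on :: "real set \<Rightarrow> (real \<Rightarrow> 'a::real_normed_vector) \<Rightarrow> bool" where
  "smooth_curve_on I f \<longleftrightarrow> (\<forall>n. \<forall>s\<in>I. ((vd ^^ n) f) differentiable (at s))"

definition pd :: "nat \<Rightarrow> (real \<Rightarrow> real \<Rightarrow> 'a::real_normed_vector) \<Rightarrow> real \<Rightarrow> real \<Rightarrow> 'a" where
  "pd i f u v = (if i = 0 then vector_derivative (\<lambda>w. f w v) (at u)
                 else vector_derivative (\<lambda>w. f u w) (at v))"

definition frenet_T :: "(real \<Rightarrow> real^3) \<Rightarrow> real \<Rightarrow> real^3" where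
  "frenet_T \<alpha> = vd \<alpha>"

definition curvature :: "(real \<Rightarrow> real^3) \<Rightarrow> real \<Rightarrow> real" where
  "curvature \<alpha> s = norm (vd (vd \<alpha>) s)"

definition frenet_N :: "(real \<Rightarrow> real^3) \<Rightarrow> real \<Rightarrow> real^3" where
  "frenet_N \<alpha> s = (1 / curvature \<alpha> s) *\<^sub>R vd (vd \<alpha>) s"

definition frenet_B :: "(real \<Rightarrow> real^3) \<Rightarrow> real \<Rightarrow> real^3" where
  "frenet_B \<alpha> s = cross3 (frenet_T \<alpha> s) (frenet_N \<alpha> s)"

text \<open>Torsion from the Frenet equation \<open>N' = -\<kappa> T + \<tau> B\<close>.\<close>
definition torsion :: "(real \<Rightarrow> real^3) \<Rightarrow> real \<Rightarrow> real" where
  "torsion \<alpha> s = inner (vd (frenet_N \<alpha>) s) (frenet_B \<alpha> s)"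

text \<open>\<open>x\<close> is a local parametrization \<open>(u0,u1) \<mapsto> x u0 u1\<close> of a surface in \<open>\<real>\<^sup>3\<close>;
  tangent vectors are given by their coordinate components (functions \<open>nat \<Rightarrow> real\<close>,
  only indices 0 and 1 matter).\<close>

definition metric :: "(real \<Rightarrow> real \<Rightarrow> real^3) \<Rightarrow> nat \<Rightarrow> nat \<Rightarrow> real \<Rightarrow> real \<Rightarrow> real" where
  "metric x i j u v = inner (pd i x u v) (pd j x u v)"

definition metric_det :: "(real \<Rightarrow> real \<Rightarrow> real^3) \<Rightarrow> real \<Rightarrow> real \<Rightarrow> real" where
  "metric_det x u v = metric x 0 0 u v * metric x 1 1 u v - (metric x 0 1 u v)\<^sup>2"

definition metric_inv :: "(real \<Rightarrow> real \<Rightarrow> real^3) \<Rightarrow> nat \<Rightarrow> nat \<Rightarrow> real \<Rightarrow> real \<Rightarrow> real" where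
  "metric_inv x i j u v =
     (if i = 0 \<and> j = 0 then metric x 1 1 u v
      else if i = 1 \<and> j = 1 then metric x 0 0 u v
      else - metric x 0 1 u v) / metric_det x u v"

definition christoffel :: "(real \<Rightarrow> real \<Rightarrow> real^3) \<Rightarrow> nat \<Rightarrow> nat \<Rightarrow> nat \<Rightarrow> real \<Rightarrow> real \<Rightarrow> real" where
  "christoffel x k i j u v =
     (1/2) * (\<Sum>l<2. metric_inv x k l u v *
        (pd i (metric x j l) u v + pd j (metric x i l) u v - pd l (metric x i j) u v))"

text \<open>\<open>R(\<partial>_i,\<partial>_j)\<partial>_k = \<Sum>_l R^l_{ijk} \<partial>_l\<close> for
  \<open>R(X,Y) = \<nabla>_X\<nabla>_Y - \<nabla>_Y\<nabla>_X - \<nabla>_{[X,Y]}\<close>.\<close>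
definition riemann :: "(real \<Rightarrow> real \<Rightarrow> real^3) \<Rightarrow> nat \<Rightarrow> nat \<Rightarrow> nat \<Rightarrow> nat \<Rightarrow> real \<Rightarrow> real \<Rightarrow> real" where
  "riemann x l i j k u v =
     pd i (christoffel x l j k) u v - pd j (christoffel x l i k) u v
     + (\<Sum>m<2. christoffel x m j k u v * christoffel x l i m u v
              - christoffel x m i k u v * christoffel x l j m u v)"

definition curv_op :: "(real \<Rightarrow> real \<Rightarrow> real^3) \<Rightarrow> real \<times> real \<Rightarrow>
    (nat \<Rightarrow> real) \<Rightarrow> (nat \<Rightarrow> real) \<Rightarrow> (nat \<Rightarrow> real) \<Rightarrow> nat \<Rightarrow> real" where
  "curv_op x p X Y Z = (\<lambda>l. \<Sum>i<2. \<Sum>j<2. \<Sum>k<2.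
      riemann x l i j k (fst p) (snd p) * X i * Y j * Z k)"

definition coord_vel :: "(real \<Rightarrow> real \<times> real) \<Rightarrow> real \<Rightarrow> nat \<Rightarrow> real" where
  "coord_vel \<gamma> s = (\<lambda>i. if i = 0 then deriv (\<lambda>r. fst (\<gamma> r)) s else deriv (\<lambda>r. snd (\<gamma> r)) s)"

definition covd :: "(real \<Rightarrow> real \<Rightarrow> real^3) \<Rightarrow> (real \<Rightarrow> real \<times> real) \<Rightarrow>
    (real \<Rightarrow> nat \<Rightarrow> real) \<Rightarrow> real \<Rightarrow> nat \<Rightarrow> real" where
  "covd x \<gamma> V s = (\<lambda>k. deriv (\<lambda>r. V r k) s
      + (\<Sum>i<2. \<Sum>j<2. christoffel x k i j (fst (\<gamma> s)) (snd (\<gamma> s)) * coord_vel \<gamma> s i * V s j))"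

definition covd_iter :: "(real \<Rightarrow> real \<Rightarrow> real^3) \<Rightarrow> (real \<Rightarrow> real \<times> real) \<Rightarrow> nat \<Rightarrow>
    real \<Rightarrow> nat \<Rightarrow> real" where
  "covd_iter x \<gamma> n = (covd x \<gamma> ^^ n) (coord_vel \<gamma>)"

definition gnorm2 :: "(real \<Rightarrow> real \<Rightarrow> real^3) \<Rightarrow> real \<times> real \<Rightarrow> (nat \<Rightarrow> real) \<Rightarrow> real" where
  "gnorm2 x p X = (\<Sum>i<2. \<Sum>j<2. metric x i j (fst p) (snd p) * X i * X j)"

definition triharmonic_in :: "(real \<Rightarrow> real \<Rightarrow> real^3) \<Rightarrow> real set \<Rightarrow> (real \<Rightarrow> real \<times> real) \<Rightarrow> bool" where
  "triharmonic_in x I \<gamma> \<longleftrightarrow>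
     (\<forall>s\<in>I. gnorm2 x (\<gamma> s) (coord_vel \<gamma> s) = 1) \<and>
     (\<forall>s\<in>I. \<forall>k<2.
        covd_iter x \<gamma> 5 s k
        + curv_op x (\<gamma> s) (covd_iter x \<gamma> 3 s) (coord_vel \<gamma> s) (coord_vel \<gamma> s) k
        - curv_op x (\<gamma> s) (covd_iter x \<gamma> 2 s) (covd_iter x \<gamma> 1 s) (coord_vel \<gamma> s) k = 0)"

text \<open>Rotation by \<open>\<pi>/2\<close> in the tangent plane, for the orientation of the chart.\<close>
definition rotJ :: "(real \<Rightarrow> real \<Rightarrow> real^3) \<Rightarrow> real \<times> real \<Rightarrow> (nat \<Rightarrow> real) \<Rightarrow> nat \<Rightarrow> real" where
  "rotJ x p X = (let u = fst p; v = snd p; d = sqrt (metric_det x u v) in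
     (\<lambda>k. if k = 0 then - (metric x 0 1 u v * X 0 + metric x 1 1 u v * X 1) / d
          else (metric x 0 0 u v * X 0 + metric x 0 1 u v * X 1) / d))"

definition has_geodesic_curvature :: "(real \<Rightarrow> real \<Rightarrow> real^3) \<Rightarrow> real set \<Rightarrow>
    (real \<Rightarrow> real \<times> real) \<Rightarrow> real \<Rightarrow> (real \<Rightarrow> real) \<Rightarrow> bool" where
  "has_geodesic_curvature x I \<gamma> e kg \<longleftrightarrow>
     (\<forall>s\<in>I. \<forall>k<2. covd_iter x \<gamma> 1 s k = kg s * (e * rotJ x (\<gamma> s) (coord_vel \<gamma> s) k))"

end

theory Submission
  imports Defs
begin

definition Dm :: "real set \<Rightarrow> nat \<Rightarrow> (real \<Rightarrow> real) \<Rightarrow> bool" where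
  "Dm S m f \<longleftrightarrow> (\<forall>j\<le>m. \<forall>s\<in>S. (deriv^^j) f differentiable (at s))"

definition sm :: "real set \<Rightarrow> (real \<Rightarrow> real) \<Rightarrow> bool" where
  "sm S f \<longleftrightarrow> (\<forall>m. Dm S m f)"

lemma ev_open: "open S \<Longrightarrow> s \<in> S \<Longrightarrow> (\<forall>r\<in>S. f r = g r) \<Longrightarrow> eventually (\<lambda>r. f r = g r) (nhds s)"
  unfolding eventually_nhds by blast

lemma deriv_open_cong: "open S \<Longrightarrow> s \<in> S \<Longrightarrow> (\<forall>r\<in>S. f r = g r) \<Longrightarrow> deriv f s = deriv g s"
  by (rule deriv_cong_ev[OF ev_open]) auto

lemma funpow_deriv_cong: "open S \<Longrightarrow> (\<forall>r\<in>S. f r = g r) \<Longrightarrow> \<forall>r\<in>S. (deriv^^j) f r = (deriv^^j) g r"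
proof (induction j)
  case 0 then show ?case by simp
next
  case (Suc j) then show ?case using deriv_open_cong[of S _ "(deriv^^j) f" "(deriv^^j) g"] by simp
qed

lemma differentiable_open_cong:
  assumes "open S" "s \<in> S" "\<forall>r\<in>S. f r = g r" "f differentiable (at s)"
  shows "(g::real\<Rightarrow>real) differentiable (at s)"
proof -
  have "DERIV f s :> deriv f s" using assms(4) DERIV_deriv_iff_real_differentiable by blast
  then have "DERIV g s :> deriv f s" using has_field_derivative_transform_within_open[of f "deriv f s" s S g] assms by blast
  then show ?thesis using real_differentiable_def by blast
qed

lemma Dm_cong: assumes "open S" "\<forall>r\<in>S. f r = g r" "Dm S m f" shows "Dm S m g"
  unfolding Dm_def
proof (intro allI impI ballI)
  fix j s assume j: "j \<le> m" and s: "s \<in> S"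
  have "(deriv^^j) f differentiable (at s)" using assms(3) j s unfolding Dm_def by blast
  then show "(deriv^^j) g differentiable (at s)"
    using differentiable_open_cong[OF assms(1) s funpow_deriv_cong[OF assms(1,2)]] by blast
qed

lemma funpow_Suc_deriv: "(deriv^^(Suc j)) f = (deriv^^j) (deriv f)"
  by (simp add: funpow_Suc_right del: funpow.simps)

lemma Dm_Suc: "Dm S (Suc m) f \<longleftrightarrow> (\<forall>s\<in>S. f differentiable (at s)) \<and> Dm S m (deriv f)"
proof
  assume a: "Dm S (Suc m) f"
  show "(\<forall>s\<in>S. f differentiable (at s)) \<and> Dm S m (deriv f)"
  proof
    have "\<forall>s\<in>S. (deriv^^0) f differentiable (at s)" using a unfolding Dm_def by blast
    then show "\<forall>s\<in>S. f differentiable (at s)" by simp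
    show "Dm S m (deriv f)" unfolding Dm_def
    proof (intro allI impI)
      fix j assume "j \<le> m"
      then have "Suc j \<le> Suc m" by simp
      then have "\<forall>s\<in>S. (deriv^^(Suc j)) f differentiable (at s)" using a unfolding Dm_def by blast
      then show "\<forall>s\<in>S. (deriv^^j) (deriv f) differentiable (at s)" by (simp only: funpow_Suc_deriv)
    qed
  qed
next
  assume a: "(\<forall>s\<in>S. f differentiable (at s)) \<and> Dm S m (deriv f)"
  show "Dm S (Suc m) f" unfolding Dm_def
  proof (intro allI impI)
    fix j assume "j \<le> Suc m"
    then show "\<forall>s\<in>S. (deriv ^^ j) f differentiable at s"
      using a unfolding Dm_def by (cases j) (auto simp: funpow_Suc_deriv simp del: funpow.simps)
  qed
qed

lemma Dm_0: "Dm S 0 f \<longleftrightarrow> (\<forall>s\<in>S. f differentiable (at s))"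
  unfolding Dm_def by simp

lemma Dm_mono: "Dm S (Suc m) f \<Longrightarrow> Dm S m f"
  unfolding Dm_def by auto

lemma Dm_const: "Dm S m (\<lambda>x. c)"
proof (induction m arbitrary: c)
  case 0 then show ?case by (simp add: Dm_0)
next
  case (Suc m) then show ?case by (simp add: Dm_Suc)
qed

lemma Dm_add: "open S \<Longrightarrow> Dm S m f \<Longrightarrow> Dm S m g \<Longrightarrow> Dm S m (\<lambda>x. f x + g x)"
proof (induction m arbitrary: f g)
  case 0 then show ?case unfolding Dm_0 by (simp add: differentiable_add)
next
  case (Suc m)
  have d: "\<forall>s\<in>S. f differentiable (at s)" "\<forall>s\<in>S. g differentiable (at s)"
    using Suc.prems(2,3) unfolding Dm_Suc by blast+
  have e: "\<forall>r\<in>S. deriv f r + deriv g r = deriv (\<lambda>x. f x + g x) r"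
  proof
    fix r assume "r \<in> S"
    then have "DERIV f r :> deriv f r" "DERIV g r :> deriv g r" using d DERIV_deriv_iff_real_differentiable by blast+
    then have "DERIV (\<lambda>x. f x + g x) r :> deriv f r + deriv g r" by (rule DERIV_add)
    then show "deriv f r + deriv g r = deriv (\<lambda>x. f x + g x) r" by (simp add: DERIV_imp_deriv)
  qed
  have "Dm S m (deriv f)" "Dm S m (deriv g)" using Suc.prems(2,3) unfolding Dm_Suc by blast+
  then have "Dm S m (\<lambda>r. deriv f r + deriv g r)" using Suc.IH[OF Suc.prems(1)] by blast
  then have "Dm S m (deriv (\<lambda>x. f x + g x))" using Dm_cong[OF Suc.prems(1) e] by blast
  moreover have "\<forall>s\<in>S. (\<lambda>x. f x + g x) differentiable (at s)" using d by (simp add: differentiable_add)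
  ultimately show ?case unfolding Dm_Suc by blast
qed

lemma Dm_mult: "open S \<Longrightarrow> Dm S m f \<Longrightarrow> Dm S m g \<Longrightarrow> Dm S m (\<lambda>x. f x * g x)"
proof (induction m arbitrary: f g)
  case 0 then show ?case unfolding Dm_0 by (simp add: differentiable_mult)
next
  case (Suc m)
  have d: "\<forall>s\<in>S. f differentiable (at s)" "\<forall>s\<in>S. g differentiable (at s)"
    using Suc.prems(2,3) unfolding Dm_Suc by blast+
  have e: "\<forall>r\<in>S. deriv f r * g r + f r * deriv g r = deriv (\<lambda>x. f x * g x) r"
  proof
    fix r assume "r \<in> S"
    then have "DERIV f r :> deriv f r" "DERIV g r :> deriv g r" using d DERIV_deriv_iff_real_differentiable by blast+
    then have "DERIV (\<lambda>x. f x * g x) r :> deriv f r * g r + f r * deriv g r"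
      using DERIV_mult[of f "deriv f r" r UNIV g "deriv g r"] by (simp add: mult.commute)
    then show "deriv f r * g r + f r * deriv g r = deriv (\<lambda>x. f x * g x) r" by (simp add: DERIV_imp_deriv)
  qed
  have a: "Dm S m (deriv f)" "Dm S m f" "Dm S m (deriv g)" "Dm S m g"
    using Suc.prems(2,3) Dm_mono unfolding Dm_Suc by blast+
  have "Dm S m (\<lambda>r. deriv f r * g r + f r * deriv g r)"
  proof (rule Dm_add[OF Suc.prems(1)])
    show "Dm S m (\<lambda>r. deriv f r * g r)" by (rule Suc.IH[OF Suc.prems(1) a(1) a(4)])
    show "Dm S m (\<lambda>r. f r * deriv g r)" by (rule Suc.IH[OF Suc.prems(1) a(2) a(3)])
  qed
  then have "Dm S m (deriv (\<lambda>x. f x * g x))" using Dm_cong[OF Suc.prems(1) e] by blast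
  moreover have "\<forall>s\<in>S. (\<lambda>x. f x * g x) differentiable (at s)" using d by (simp add: differentiable_mult)
  ultimately show ?case unfolding Dm_Suc by blast
qed

lemma Dm_comp: "open S \<Longrightarrow> open V \<Longrightarrow> f ` S \<subseteq> V \<Longrightarrow> Dm V m h \<Longrightarrow> Dm S m f \<Longrightarrow> Dm S m (\<lambda>x. h (f x))"
proof (induction m arbitrary: f h)
  case 0
  show ?case unfolding Dm_0
  proof
    fix s assume s: "s \<in> S"
    then have "f s \<in> V" using 0 by blast
    then have d1: "DERIV f s :> deriv f s" and d2: "DERIV h (f s) :> deriv h (f s)"
      using 0(4,5) s DERIV_deriv_iff_real_differentiable unfolding Dm_0 by blast+
    have "DERIV (\<lambda>x. h (f x)) s :> deriv h (f s) * deriv f s" by (rule DERIV_chain2[OF d2 d1])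
    then show "(\<lambda>x. h (f x)) differentiable (at s)" using real_differentiable_def by blast
  qed
next
  case (Suc m)
  have d: "\<forall>s\<in>S. f differentiable (at s)" "\<forall>s\<in>V. h differentiable (at s)"
    using Suc.prems(4,5) unfolding Dm_Suc by blast+
  have e: "\<forall>r\<in>S. deriv h (f r) * deriv f r = deriv (\<lambda>x. h (f x)) r \<and> (\<lambda>x. h (f x)) differentiable (at r)"
  proof
    fix r assume r: "r \<in> S"
    then have "f r \<in> V" using Suc.prems(3) by auto
    then have d1: "DERIV f r :> deriv f r" and d2: "DERIV h (f r) :> deriv h (f r)" using d r DERIV_deriv_iff_real_differentiable by blast+
    have D: "DERIV (\<lambda>x. h (f x)) r :> deriv h (f r) * deriv f r" by (rule DERIV_chain2[OF d2 d1])
    then have "deriv h (f r) * deriv f r = deriv (\<lambda>x. h (f x)) r" by (simp add: DERIV_imp_deriv)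
    moreover have "(\<lambda>x. h (f x)) differentiable (at r)" using D real_differentiable_def by blast
    ultimately show "deriv h (f r) * deriv f r = deriv (\<lambda>x. h (f x)) r \<and> (\<lambda>x. h (f x)) differentiable (at r)" by blast
  qed
  have "Dm V m (deriv h)" using Suc.prems(4) unfolding Dm_Suc by blast
  moreover have "Dm S m f" by (rule Dm_mono[OF Suc.prems(5)])
  ultimately have a: "Dm S m (\<lambda>r. deriv h (f r))" by (rule Suc.IH[OF Suc.prems(1-3)])
  have b: "Dm S m (deriv f)" using Suc.prems(5) unfolding Dm_Suc by blast
  have m: "Dm S m (\<lambda>r. deriv h (f r) * deriv f r)" by (rule Dm_mult[OF Suc.prems(1) a b])
  have eq: "\<forall>r\<in>S. deriv h (f r) * deriv f r = deriv (\<lambda>x. h (f x)) r" using e by blast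
  have dd: "Dm S m (deriv (\<lambda>x. h (f x)))" by (rule Dm_cong[OF Suc.prems(1) eq m])
  have df: "\<forall>s\<in>S. (\<lambda>x. h (f x)) differentiable (at s)" using e by blast
  show ?case unfolding Dm_Suc by (rule conjI[OF df dd])
qed

lemma DERIV_cpowr: "(s::real) > 0 \<Longrightarrow> DERIV (\<lambda>x. c * x powr a) s :> (c * a) * s powr (a - 1)"
  using DERIV_cmult[OF has_real_derivative_powr[of s a], of c] by (simp add: mult.assoc)

lemma Dm_powr: "Dm {0<..} m (\<lambda>x::real. c * x powr a)"
proof (induction m arbitrary: c a)
  case 0
  show ?case unfolding Dm_0
  proof
    fix s :: real assume "s \<in> {0<..}"
    then show "(\<lambda>x. c * x powr a) differentiable (at s)" using DERIV_cpowr real_differentiable_def by fastforce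
  qed
next
  case (Suc m)
  have e: "\<forall>s\<in>{0<..}. (c * a) * s powr (a - 1) = deriv (\<lambda>x. c * x powr a) s \<and> (\<lambda>x. c * x powr a) differentiable (at s)"
  proof
    fix s :: real assume "s \<in> {0<..}"
    then have "DERIV (\<lambda>x. c * x powr a) s :> (c * a) * s powr (a - 1)" using DERIV_cpowr by simp
    then show "(c * a) * s powr (a - 1) = deriv (\<lambda>x. c * x powr a) s \<and> (\<lambda>x. c * x powr a) differentiable (at s)"
      using real_differentiable_def DERIV_imp_deriv by metis
  qed
  have "Dm {0<..} m (deriv (\<lambda>x. c * x powr a))" using Dm_cong[OF _ _ Suc.IH[of "c*a" "a-1"]] e by (metis open_greaterThan)
  then show ?case using e unfolding Dm_Suc by blast
qed

lemma sm_D: "sm S f \<Longrightarrow> s \<in> S \<Longrightarrow> ((deriv^^j) f has_real_derivative (deriv^^(Suc j)) f s) (at s)"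
  unfolding sm_def Dm_def using DERIV_deriv_iff_real_differentiable by fastforce


lemma deriv_const_open:
  assumes "open S" "s \<in> S" "\<forall>r\<in>S. f r = c" "(f has_real_derivative D) (at s)"
  shows "D = 0"
proof -
  have "((\<lambda>r. c) has_real_derivative D) (at s)"
    by (rule has_field_derivative_transform_within_open[OF assms(4) assms(1,2)]) (use assms(3) in auto)
  then show ?thesis using DERIV_const DERIV_unique by blast
qed

lemma inner_vd:
  fixes f g :: "real \<Rightarrow> 'a::real_inner"
  assumes "(f has_vector_derivative f') (at s)" "(g has_vector_derivative g') (at s)"
  shows "((\<lambda>r. inner (f r) (g r)) has_real_derivative (inner (f s) g' + inner f' (g s))) (at s)"
  using bounded_bilinear.has_vector_derivative[OF bounded_bilinear_inner assms]
  by (simp add: has_real_derivative_iff_has_vector_derivative)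

lemma vd_open:
  assumes "open S" "s \<in> S" "\<forall>r\<in>S. f r = g r" "(g has_real_derivative D) (at s)"
  shows "vector_derivative f (at s) = D"
proof -
  have "(f has_real_derivative D) (at s)"
    by (rule has_field_derivative_transform_within_open[OF assms(4) assms(1,2)]) (use assms(3) in auto)
  then show ?thesis by (simp add: has_real_derivative_iff_has_vector_derivative vector_derivative_at)
qed

lemma vd_real: "(g has_real_derivative D) (at s) \<Longrightarrow> vector_derivative g (at s) = D"
  by (simp add: has_real_derivative_iff_has_vector_derivative vector_derivative_at)

lemma sum2: "(\<Sum>l<(2::nat). f l) = f 0 + f 1"
  by (simp add: numeral_2_eq_2)

locale curve =
  fixes \<alpha> :: "real \<Rightarrow> real^3" and I :: "real set"
  assumes I_open: "open I"
    and smooth: "smooth_curve_on I \<alpha>"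
    and arclen: "\<forall>s\<in>I. norm (vd \<alpha> s) = 1"
    and kpos: "\<forall>s\<in>I. curvature \<alpha> s \<noteq> 0"
begin

abbreviation "A k \<equiv> (vd^^k) \<alpha>"
abbreviation "\<kappa> \<equiv> curvature \<alpha>"
abbreviation "kd j \<equiv> (deriv^^j) \<kappa>"
abbreviation "N \<equiv> frenet_N \<alpha>"

lemma A1: "vd \<alpha> = A 1" by simp
lemma A2: "vd (vd \<alpha>) = A 2" by (simp add: numeral_2_eq_2)

lemma A_deriv: "s \<in> I \<Longrightarrow> (A k has_vector_derivative A (Suc k) s) (at s)"
proof -
  assume s: "s \<in> I"
  have "A k differentiable (at s)" using smooth s unfolding smooth_curve_on_def by blast
  then have "(A k has_vector_derivative vector_derivative (A k) (at s)) (at s)"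
    using vector_derivative_works by blast
  then show ?thesis by (simp add: vd_def)
qed

lemma comp_deriv: "s \<in> I \<Longrightarrow> ((\<lambda>r. A k r $ i) has_real_derivative A (Suc k) s $ i) (at s)"
proof -
  assume s: "s \<in> I"
  have "((\<lambda>r. A k r $ i) has_vector_derivative A (Suc k) s $ i) (at s)"
    by (rule bounded_linear.has_vector_derivative[OF bounded_linear_vec_nth A_deriv[OF s]])
  then show ?thesis by (simp add: has_real_derivative_iff_has_vector_derivative)
qed

lemma comp_Dm: "Dm I m (\<lambda>r. A k r $ i)"
proof (induction m arbitrary: k)
  case 0
  show ?case unfolding Dm_0 using comp_deriv real_differentiable_def by blast
next
  case (Suc m)
  have e: "\<forall>r\<in>I. A (Suc k) r $ i = deriv (\<lambda>r. A k r $ i) r"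
  proof
    fix r assume "r \<in> I"
    from DERIV_imp_deriv[OF comp_deriv[OF this]] show "A (Suc k) r $ i = deriv (\<lambda>r. A k r $ i) r" by simp
  qed
  have "Dm I m (deriv (\<lambda>r. A k r $ i))" by (rule Dm_cong[OF I_open e Suc.IH])
  moreover have "\<forall>s\<in>I. (\<lambda>r. A k r $ i) differentiable (at s)" using comp_deriv real_differentiable_def by blast
  ultimately show ?case unfolding Dm_Suc by blast
qed

definition p :: "real \<Rightarrow> real" where
  "p r = A 2 r $ 1 * A 2 r $ 1 + A 2 r $ 2 * A 2 r $ 2 + A 2 r $ 3 * A 2 r $ 3"

lemma kappa_norm: "\<kappa> r = norm (A 2 r)"
  unfolding curvature_def A2 ..

lemma kappa_p: "\<kappa> r = sqrt (p r)"
  unfolding kappa_norm p_def norm_eq_sqrt_inner inner_vec_def sum_3 by simp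

lemma p_nonneg: "p r \<ge> 0" unfolding p_def by simp

lemma p_pos: "r \<in> I \<Longrightarrow> p r > 0"
  using kpos kappa_p p_nonneg by (metis less_eq_real_def real_sqrt_zero)

lemma kappa_pos: "r \<in> I \<Longrightarrow> \<kappa> r > 0"
  using kpos kappa_norm by (metis norm_ge_zero less_eq_real_def)

lemma p_Dm: "Dm I m p"
proof -
  have a: "Dm I m (\<lambda>r. A 2 r $ i * A 2 r $ i)" for i
    by (rule Dm_mult[OF I_open comp_Dm comp_Dm])
  have "Dm I m (\<lambda>r. A 2 r $ 1 * A 2 r $ 1 + A 2 r $ 2 * A 2 r $ 2)"
    by (rule Dm_add[OF I_open a a])
  then have "Dm I m (\<lambda>r. (A 2 r $ 1 * A 2 r $ 1 + A 2 r $ 2 * A 2 r $ 2) + A 2 r $ 3 * A 2 r $ 3)"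
    by (rule Dm_add[OF I_open _ a])
  then show ?thesis unfolding p_def[abs_def] .
qed

lemma kappa_sm: "sm I \<kappa>"
  unfolding sm_def
proof
  fix m
  have "p ` I \<subseteq> {0<..}" using p_pos by auto
  then have dm: "Dm I m (\<lambda>r. 1 * p r powr (1/2))"
    by (rule Dm_comp[OF I_open open_greaterThan _ Dm_powr p_Dm])
  have eq: "\<forall>r\<in>I. 1 * p r powr (1/2) = \<kappa> r"
  proof
    fix r show "1 * p r powr (1/2) = \<kappa> r" using kappa_p[of r] powr_half_sqrt[OF p_nonneg[of r]] by simp
  qed
  show "Dm I m \<kappa>" by (rule Dm_cong[OF I_open eq dm])
qed

lemma kd_deriv: "s \<in> I \<Longrightarrow> (kd j has_real_derivative kd (Suc j) s) (at s)"
  by (rule sm_D[OF kappa_sm])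

lemma kd0: "kd 0 = \<kappa>" by simp

lemma kappa_deriv: "s \<in> I \<Longrightarrow> (\<kappa> has_real_derivative kd 1 s) (at s)"
  using kd_deriv[of s 0] by simp


lemma A_deriv1: "s \<in> I \<Longrightarrow> (A 1 has_vector_derivative A 2 s) (at s)"
  using A_deriv[of s 1] by (simp add: numeral_2_eq_2)

lemma A_deriv2: "s \<in> I \<Longrightarrow> (A 2 has_vector_derivative A 3 s) (at s)"
  using A_deriv[of s 2] by (simp add: numeral_3_eq_3)

lemma TT: "s \<in> I \<Longrightarrow> A 1 s \<bullet> A 1 s = 1"
  using arclen by (simp add: power2_norm_eq_inner[symmetric])

lemma T_A2: assumes s: "s \<in> I" shows "A 1 s \<bullet> A 2 s = 0"
proof -
  have "((\<lambda>r. A 1 r \<bullet> A 1 r) has_real_derivative (A 1 s \<bullet> A 2 s + A 2 s \<bullet> A 1 s)) (at s)"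
    by (rule inner_vd[OF A_deriv1[OF s] A_deriv1[OF s]])
  moreover have "\<forall>r\<in>I. A 1 r \<bullet> A 1 r = 1" using TT by blast
  ultimately have "A 1 s \<bullet> A 2 s + A 2 s \<bullet> A 1 s = 0" by (intro deriv_const_open[OF I_open s])
  then show ?thesis by (simp add: inner_commute)
qed

lemma N_def: "N r = (1 / \<kappa> r) *\<^sub>R A 2 r"
  unfolding frenet_N_def A2 ..

lemma A2A2: "A 2 r \<bullet> A 2 r = (\<kappa> r)\<^sup>2"
  unfolding kappa_norm by (simp add: power2_norm_eq_inner)

lemma A2_eq: "s \<in> I \<Longrightarrow> A 2 s = \<kappa> s *\<^sub>R N s"
  using kpos unfolding N_def by simp

lemma NN: "s \<in> I \<Longrightarrow> N s \<bullet> N s = 1"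
  using kpos A2A2[of s] unfolding N_def by (simp add: power2_eq_square)

lemma TN: "s \<in> I \<Longrightarrow> A 1 s \<bullet> N s = 0"
  using T_A2 unfolding N_def by simp

definition Nd :: "real \<Rightarrow> real^3" where
  "Nd r = (- kd 1 r / (\<kappa> r)\<^sup>2) *\<^sub>R A 2 r + (1 / \<kappa> r) *\<^sub>R A 3 r"

lemma inv_kappa_deriv: assumes s: "s \<in> I"
  shows "((\<lambda>r. 1 / \<kappa> r) has_real_derivative - kd 1 s / (\<kappa> s)\<^sup>2) (at s)"
  using kappa_deriv[OF s] kpos s
  by (auto intro!: derivative_eq_intros simp: power2_eq_square)

lemma N_deriv: assumes s: "s \<in> I" shows "(N has_vector_derivative Nd s) (at s)"
proof -
  have "((\<lambda>r. (1 / \<kappa> r) *\<^sub>R A 2 r) has_vector_derivative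
      ((1 / \<kappa> s) *\<^sub>R A 3 s + (- kd 1 s / (\<kappa> s)\<^sup>2) *\<^sub>R A 2 s)) (at s)"
    by (rule has_vector_derivative_scaleR[OF inv_kappa_deriv[OF s] A_deriv2[OF s]])
  moreover have "N = (\<lambda>r. (1 / \<kappa> r) *\<^sub>R A 2 r)" using N_def by (rule ext)
  ultimately show ?thesis unfolding Nd_def by (simp add: add.commute)
qed

lemma vdN: "s \<in> I \<Longrightarrow> vd N s = Nd s"
  unfolding vd_def using N_deriv vector_derivative_at by blast

lemma N_Nd: assumes s: "s \<in> I" shows "N s \<bullet> Nd s = 0"
proof -
  have "((\<lambda>r. N r \<bullet> N r) has_real_derivative (N s \<bullet> Nd s + Nd s \<bullet> N s)) (at s)"
    by (rule inner_vd[OF N_deriv[OF s] N_deriv[OF s]])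
  moreover have "\<forall>r\<in>I. N r \<bullet> N r = 1" using NN by blast
  ultimately have "N s \<bullet> Nd s + Nd s \<bullet> N s = 0" by (intro deriv_const_open[OF I_open s])
  then show ?thesis by (simp add: inner_commute)
qed

lemma T_Nd: assumes s: "s \<in> I" shows "A 1 s \<bullet> Nd s = - \<kappa> s"
proof -
  have "((\<lambda>r. A 1 r \<bullet> N r) has_real_derivative (A 1 s \<bullet> Nd s + A 2 s \<bullet> N s)) (at s)"
    by (rule inner_vd[OF A_deriv1[OF s] N_deriv[OF s]])
  moreover have "\<forall>r\<in>I. A 1 r \<bullet> N r = 0" using TN by blast
  ultimately have "A 1 s \<bullet> Nd s + A 2 s \<bullet> N s = 0" by (intro deriv_const_open[OF I_open s])
  moreover have "A 2 s \<bullet> N s = \<kappa> s" using A2_eq[OF s] NN[OF s] by simp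
  ultimately show ?thesis by simp
qed

definition q :: "real \<Rightarrow> real" where "q r = Nd r \<bullet> Nd r"

lemma Nd_diff: assumes s: "s \<in> I" shows "Nd differentiable (at s)"
proof -
  have k: "\<kappa> differentiable (at s)" using kappa_deriv[OF s] real_differentiable_def by blast
  have k1: "kd 1 differentiable (at s)" using kd_deriv[OF s, of 1] real_differentiable_def by blast
  have a2: "A 2 differentiable (at s)" using A_deriv2[OF s] differentiableI_vector by blast
  have a3: "A 3 differentiable (at s)" using A_deriv[OF s, of 3] differentiableI_vector by blast
  have ne: "(\<kappa> s)\<^sup>2 \<noteq> 0" "\<kappa> s \<noteq> 0" using kpos s by auto
  have c: "(\<lambda>r. - kd 1 r / (\<kappa> r)\<^sup>2) differentiable (at s)"
    using k k1 ne by (intro differentiable_divide differentiable_minus differentiable_power) auto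
  have d: "(\<lambda>r. 1 / \<kappa> r) differentiable (at s)"
    using k ne by (intro differentiable_divide) auto
  show "Nd differentiable (at s)"
    unfolding Nd_def[abs_def] using c d a2 a3 by (intro differentiable_add differentiable_scaleR) auto
qed

lemma q_diff: assumes s: "s \<in> I" shows "q differentiable (at s)"
  using Nd_diff[OF s] unfolding q_def[abs_def] by simp


abbreviation "X \<equiv> (\<lambda>s t. \<alpha> s + t *\<^sub>R N s)"
abbreviation "\<gamma> \<equiv> (\<lambda>s. (s, 0::real))"

lemma pdx0: assumes s: "s \<in> I" shows "pd 0 X s t = A 1 s + t *\<^sub>R Nd s"
proof -
  have a: "(A 0 has_vector_derivative A 1 s) (at s)" using A_deriv[OF s, of 0] by simp
  have "((\<lambda>w. A 0 w + t *\<^sub>R N w) has_vector_derivative (A 1 s + (t *\<^sub>R Nd s + 0 *\<^sub>R N s))) (at s)"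
    by (rule has_vector_derivative_add[OF a has_vector_derivative_scaleR[OF DERIV_const N_deriv[OF s]]])
  then have "((\<lambda>w. \<alpha> w + t *\<^sub>R N w) has_vector_derivative (A 1 s + t *\<^sub>R Nd s)) (at s)" by simp
  then show ?thesis unfolding pd_def by (simp add: vector_derivative_at)
qed

lemma pdx1: "pd 1 X s t = N s"
proof -
  have "((\<lambda>w. \<alpha> s + w *\<^sub>R N s) has_vector_derivative (0 + (t *\<^sub>R 0 + 1 *\<^sub>R N s))) (at t)"
    by (rule has_vector_derivative_add[OF has_vector_derivative_const has_vector_derivative_scaleR[OF DERIV_ident has_vector_derivative_const]])
  then have "((\<lambda>w. \<alpha> s + w *\<^sub>R N s) has_vector_derivative N s) (at t)" by simp
  then show ?thesis unfolding pd_def by (simp add: vector_derivative_at)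
qed

definition E :: "real \<Rightarrow> real \<Rightarrow> real" where "E s t = 1 - 2 * t * \<kappa> s + t\<^sup>2 * q s"

lemma m00: assumes s: "s \<in> I" shows "metric X 0 0 s t = E s t"
proof -
  have "metric X 0 0 s t = (A 1 s + t *\<^sub>R Nd s) \<bullet> (A 1 s + t *\<^sub>R Nd s)"
    unfolding metric_def pdx0[OF s] ..
  also have "\<dots> = A 1 s \<bullet> A 1 s + 2 * t * (A 1 s \<bullet> Nd s) + t\<^sup>2 * (Nd s \<bullet> Nd s)"
    by (simp add: inner_add_left inner_add_right inner_commute power2_eq_square algebra_simps)
  also have "\<dots> = E s t" unfolding E_def q_def TT[OF s] T_Nd[OF s] by simp
  finally show ?thesis .
qed

lemma m01: assumes s: "s \<in> I" shows "metric X 0 1 s t = 0"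
proof -
  have "metric X 0 1 s t = A 1 s \<bullet> N s + t * (Nd s \<bullet> N s)"
    unfolding metric_def pdx0[OF s] pdx1 by (simp add: inner_add_left)
  also have "\<dots> = 0" using TN[OF s] N_Nd[OF s] by (simp add: inner_commute)
  finally show ?thesis .
qed

lemma m10: assumes s: "s \<in> I" shows "metric X 1 0 s t = 0"
proof -
  have "metric X 1 0 s t = metric X 0 1 s t" unfolding metric_def by (simp add: inner_commute)
  then show ?thesis using m01[OF s] by simp
qed

lemma m11: assumes s: "s \<in> I" shows "metric X 1 1 s t = 1"
  unfolding metric_def pdx1 using NN[OF s] .

lemma q_deriv: "s \<in> I \<Longrightarrow> (q has_real_derivative deriv q s) (at s)"
  using q_diff DERIV_deriv_iff_real_differentiable by blast

lemma E_deriv_s: assumes s: "s \<in> I"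
  shows "((\<lambda>r. E r t) has_real_derivative (- 2 * t * kd 1 s + t\<^sup>2 * deriv q s)) (at s)"
  unfolding E_def using kappa_deriv[OF s] q_deriv[OF s]
  by (auto intro!: derivative_eq_intros)

lemma E_deriv_t:
  shows "((\<lambda>w. E s w) has_real_derivative (- 2 * \<kappa> s + 2 * t * q s)) (at t)"
  unfolding E_def by (auto intro!: derivative_eq_intros simp: algebra_simps)

lemma pm0_00: assumes s: "s \<in> I" shows "pd 0 (metric X 0 0) s t = - 2 * t * kd 1 s + t\<^sup>2 * deriv q s"
  unfolding pd_def using vd_open[OF I_open s _ E_deriv_s[OF s]] m00 by simp

lemma pm1_00: assumes s: "s \<in> I" shows "pd 1 (metric X 0 0) s t = - 2 * \<kappa> s + 2 * t * q s"
proof -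
  have "(\<lambda>w. metric X 0 0 s w) = (\<lambda>w. E s w)" using m00[OF s] by (rule ext)
  then show ?thesis unfolding pd_def using vd_real[OF E_deriv_t] by simp
qed

lemma pd_const:
  fixes f :: "real \<Rightarrow> real \<Rightarrow> real"
  assumes s: "s \<in> I" and c: "\<forall>r\<in>I. \<forall>w. f r w = c"
  shows "pd i f s t = 0"
proof (cases "i = 0")
  case True
  have "vector_derivative (\<lambda>w. f w t) (at s) = 0"
    by (rule vd_open[OF I_open s, of "\<lambda>w. f w t" "\<lambda>w. c" 0]) (use c in auto)
  then show ?thesis using True unfolding pd_def by simp
next
  case False
  have "(\<lambda>w. f s w) = (\<lambda>w. c)" using c s by auto
  then show ?thesis using False unfolding pd_def by simp
qed

lemma pm01: "s \<in> I \<Longrightarrow> pd i (metric X 0 1) s t = 0"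
  by (rule pd_const[of _ _ 0]) (use m01 in auto)
lemma pm10: "s \<in> I \<Longrightarrow> pd i (metric X 1 0) s t = 0"
  by (rule pd_const[of _ _ 0]) (use m10 in auto)
lemma pm11: "s \<in> I \<Longrightarrow> pd i (metric X 1 1) s t = 0"
  by (rule pd_const[of _ _ 1]) (use m11 in auto)

lemma mdet: "s \<in> I \<Longrightarrow> metric_det X s t = E s t"
  unfolding metric_det_def using m00 m01 m11 by simp

lemma minv: assumes s: "s \<in> I"
  shows "metric_inv X 0 0 s t = 1 / E s t" "metric_inv X 1 1 s t = E s t / E s t"
    "metric_inv X 0 1 s t = 0" "metric_inv X 1 0 s t = 0"
  unfolding metric_inv_def using mdet[OF s] m00[OF s] m01[OF s] m11[OF s] by simp_all


definition P0 :: "real \<Rightarrow> real \<Rightarrow> real" where "P0 s t = - 2 * t * kd 1 s + t\<^sup>2 * deriv q s"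
definition P1 :: "real \<Rightarrow> real \<Rightarrow> real" where "P1 s t = - 2 * \<kappa> s + 2 * t * q s"

lemma chr: assumes s: "s \<in> I"
  shows "christoffel X 0 0 0 s t = 1/2 * (P0 s t / E s t)"
    "christoffel X 0 0 1 s t = 1/2 * (P1 s t / E s t)"
    "christoffel X 0 1 0 s t = 1/2 * (P1 s t / E s t)"
    "christoffel X 0 1 1 s t = 0"
    "christoffel X 1 0 0 s t = - (1/2) * (E s t / E s t * P1 s t)"
    "christoffel X 1 0 1 s t = 0"
    "christoffel X 1 1 0 s t = 0"
    "christoffel X 1 1 1 s t = 0"
  unfolding christoffel_def sum2 P0_def P1_def
  using minv[OF s] pm0_00[OF s] pm1_00[OF s] pm01[OF s] pm10[OF s] pm11[OF s] by simp_all

lemma E0: "E s 0 = 1" unfolding E_def by simp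
lemma P00: "P0 s 0 = 0" unfolding P0_def by simp
lemma P10: "P1 s 0 = - 2 * \<kappa> s" unfolding P1_def by simp

lemma chr0: assumes s: "s \<in> I"
  shows "christoffel X 0 0 0 s 0 = 0"
    "christoffel X 0 0 1 s 0 = - \<kappa> s"
    "christoffel X 0 1 0 s 0 = - \<kappa> s"
    "christoffel X 0 1 1 s 0 = 0"
    "christoffel X 1 0 0 s 0 = \<kappa> s"
    "christoffel X 1 0 1 s 0 = 0"
    "christoffel X 1 1 0 s 0 = 0"
    "christoffel X 1 1 1 s 0 = 0"
  using chr[OF s, of 0] unfolding E0 P00 P10 by simp_all


lemma pc1_000: assumes s: "s \<in> I" shows "pd 1 (christoffel X 0 0 0) s 0 = - kd 1 s"
proof -
  have e: "(\<lambda>w. christoffel X 0 0 0 s w) = (\<lambda>w. 1/2 * (P0 s w / E s w))" using chr(1)[OF s] by (rule ext)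
  have "((\<lambda>w. 1/2 * (P0 s w / E s w)) has_real_derivative - kd 1 s) (at 0)"
    unfolding P0_def E_def by (auto intro!: derivative_eq_intros)
  then show ?thesis unfolding pd_def e using vd_real by simp
qed

lemma pc1_100: assumes s: "s \<in> I" shows "pd 1 (christoffel X 1 0 0) s 0 = - q s"
proof -
  have e: "(\<lambda>w. christoffel X 1 0 0 s w) = (\<lambda>w. - (1/2) * (E s w / E s w * P1 s w))" using chr(5)[OF s] by (rule ext)
  have ne: "E s 0 \<noteq> 0" by (simp add: E0)
  have d1: "((\<lambda>w. E s w / E s w) has_real_derivative 0) (at 0)"
    by (rule DERIV_cong[OF DERIV_divide[OF E_deriv_t E_deriv_t ne]]) (simp add: E0)
  have d2: "((\<lambda>w. P1 s w) has_real_derivative 2 * q s) (at 0)"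
    unfolding P1_def by (auto intro!: derivative_eq_intros)
  have "((\<lambda>w. - (1/2) * (E s w / E s w * P1 s w)) has_real_derivative - q s) (at 0)"
    by (rule DERIV_cong[OF DERIV_cmult[OF DERIV_mult[OF d1 d2]]]) (simp add: E0 P10)
  then show ?thesis unfolding pd_def e using vd_real by simp
qed

lemma pc0_010: assumes s: "s \<in> I" shows "pd 0 (christoffel X 0 1 0) s 0 = - kd 1 s"
proof -
  have "vector_derivative (\<lambda>r. christoffel X 0 1 0 r 0) (at s) = - kd 1 s"
  proof (rule vd_open[OF I_open s])
    show "\<forall>r\<in>I. christoffel X 0 1 0 r 0 = - \<kappa> r" using chr0 by blast
    show "((\<lambda>r. - \<kappa> r) has_real_derivative - kd 1 s) (at s)"
      using kappa_deriv[OF s] by (rule DERIV_minus)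
  qed
  then show ?thesis unfolding pd_def by simp
qed

lemma pc0_110: assumes s: "s \<in> I" shows "pd 0 (christoffel X 1 1 0) s 0 = 0"
proof -
  have "vector_derivative (\<lambda>r. christoffel X 1 1 0 r 0) (at s) = 0"
  proof (rule vd_open[OF I_open s])
    show "\<forall>r\<in>I. christoffel X 1 1 0 r 0 = 0" using chr0 by blast
    show "((\<lambda>r. 0) has_real_derivative 0) (at s)" by (rule DERIV_const)
  qed
  then show ?thesis unfolding pd_def by simp
qed

lemma riem: assumes s: "s \<in> I"
  shows "riemann X 0 1 0 0 s 0 = 0"
    "riemann X 1 1 0 0 s 0 = (\<kappa> s)\<^sup>2 - q s"
    "riemann X 0 0 1 0 s 0 = 0"
    "riemann X 1 0 1 0 s 0 = q s - (\<kappa> s)\<^sup>2"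
  unfolding riemann_def sum2
  using pc1_000[OF s] pc1_100[OF s] pc0_010[OF s] pc0_110[OF s] chr0[OF s]
  by (simp_all add: power2_eq_square)


lemma cv: "coord_vel \<gamma> s = (\<lambda>i. if i = 0 then 1 else 0)"
proof -
  have a: "(\<lambda>r. fst (r, 0::real)) = (\<lambda>r. r)" "(\<lambda>r. snd (r, 0::real)) = (\<lambda>r. 0)" by auto
  have b: "deriv (\<lambda>r. r) s = (1::real)" by (rule DERIV_imp_deriv[OF DERIV_ident])
  have c: "deriv (\<lambda>r. 0) s = (0::real)" by (rule DERIV_imp_deriv[OF DERIV_const])
  show ?thesis unfolding coord_vel_def a b c ..
qed

lemma covd_form: assumes s: "s \<in> I"
  shows "covd X \<gamma> V s 0 = deriv (\<lambda>r. V r 0) s - \<kappa> s * V s 1"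
    "covd X \<gamma> V s 1 = deriv (\<lambda>r. V r 1) s + \<kappa> s * V s 0"
  unfolding covd_def sum2 cv using chr0[OF s] by simp_all

lemma covd_step:
  assumes s: "s \<in> I" and V: "\<forall>r\<in>I. V r 0 = a r \<and> V r 1 = b r"
    and da: "(a has_real_derivative a') (at s)" and db: "(b has_real_derivative b') (at s)"
  shows "covd X \<gamma> V s 0 = a' - \<kappa> s * b s \<and> covd X \<gamma> V s 1 = b' + \<kappa> s * a s"
proof -
  have "deriv (\<lambda>r. V r 0) s = deriv a s" by (rule deriv_open_cong[OF I_open s]) (use V in auto)
  also have "\<dots> = a'" using da by (rule DERIV_imp_deriv)
  finally have 0: "deriv (\<lambda>r. V r 0) s = a'" .
  have "deriv (\<lambda>r. V r 1) s = deriv b s" by (rule deriv_open_cong[OF I_open s]) (use V in auto)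
  also have "\<dots> = b'" using db by (rule DERIV_imp_deriv)
  finally have 1: "deriv (\<lambda>r. V r 1) s = b'" .
  show ?thesis using covd_form[OF s, of V] 0 1 V s by simp
qed

lemma ci_Suc: "covd_iter X \<gamma> (Suc n) = covd X \<gamma> (covd_iter X \<gamma> n)"
  unfolding covd_iter_def by simp

lemma k0D: "s \<in> I \<Longrightarrow> (\<kappa> has_real_derivative kd 1 s) (at s)" by (rule kappa_deriv)
lemma k1D: "s \<in> I \<Longrightarrow> (kd 1 has_real_derivative kd 2 s) (at s)"
  using kd_deriv[of s 1] by (simp add: numeral_2_eq_2)
lemma k2D: "s \<in> I \<Longrightarrow> (kd 2 has_real_derivative kd 3 s) (at s)"
  using kd_deriv[of s 2] by (simp add: numeral_3_eq_3)
lemma k3D: "s \<in> I \<Longrightarrow> (kd 3 has_real_derivative kd 4 s) (at s)"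
  using kd_deriv[of s 3] by (simp add: eval_nat_numeral)

lemma ci0: "covd_iter X \<gamma> 0 r 0 = 1" "covd_iter X \<gamma> 0 r 1 = 0" "covd_iter X \<gamma> 0 r (Suc 0) = 0"
  unfolding covd_iter_def cv by simp_all

lemma ci1: "\<forall>r\<in>I. covd_iter X \<gamma> 1 r 0 = 0 \<and> covd_iter X \<gamma> 1 r 1 = \<kappa> r"
proof
  fix r assume r: "r \<in> I"
  have "covd X \<gamma> (covd_iter X \<gamma> 0) r 0 = 0 - \<kappa> r * 0 \<and> covd X \<gamma> (covd_iter X \<gamma> 0) r 1 = 0 + \<kappa> r * 1"
    by (rule covd_step[OF r _ DERIV_const DERIV_const]) (simp add: ci0)
  then show "covd_iter X \<gamma> 1 r 0 = 0 \<and> covd_iter X \<gamma> 1 r 1 = \<kappa> r"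
    using ci_Suc[of 0] by simp
qed

lemma ci2: "\<forall>r\<in>I. covd_iter X \<gamma> 2 r 0 = - (\<kappa> r)\<^sup>2 \<and> covd_iter X \<gamma> 2 r 1 = kd 1 r"
proof
  fix r assume r: "r \<in> I"
  have "covd X \<gamma> (covd_iter X \<gamma> 1) r 0 = 0 - \<kappa> r * \<kappa> r \<and> covd X \<gamma> (covd_iter X \<gamma> 1) r 1 = kd 1 r + \<kappa> r * 0"
    by (rule covd_step[OF r ci1 DERIV_const k0D[OF r]])
  then show "covd_iter X \<gamma> 2 r 0 = - (\<kappa> r)\<^sup>2 \<and> covd_iter X \<gamma> 2 r 1 = kd 1 r"
    using ci_Suc[of 1] by (simp add: numeral_2_eq_2 power2_eq_square)
qed


lemma ci3: "\<forall>r\<in>I. covd_iter X \<gamma> 3 r 0 = - 3 * \<kappa> r * kd 1 r \<and> covd_iter X \<gamma> 3 r 1 = kd 2 r - (\<kappa> r)^3"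
proof
  fix r assume r: "r \<in> I"
  have da: "((\<lambda>r. - (\<kappa> r)\<^sup>2) has_real_derivative - (2 * \<kappa> r * kd 1 r)) (at r)"
    using k0D[OF r] by (auto intro!: derivative_eq_intros)
  have "covd X \<gamma> (covd_iter X \<gamma> 2) r 0 = - (2 * \<kappa> r * kd 1 r) - \<kappa> r * kd 1 r \<and>
        covd X \<gamma> (covd_iter X \<gamma> 2) r 1 = kd 2 r + \<kappa> r * (- (\<kappa> r)\<^sup>2)"
    by (rule covd_step[OF r ci2 da k1D[OF r]])
  moreover have "covd_iter X \<gamma> 3 = covd X \<gamma> (covd_iter X \<gamma> 2)" using ci_Suc[of 2] by (simp add: numeral_3_eq_3)
  ultimately show "covd_iter X \<gamma> 3 r 0 = - 3 * \<kappa> r * kd 1 r \<and> covd_iter X \<gamma> 3 r 1 = kd 2 r - (\<kappa> r)^3"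
    by (simp add: algebra_simps power2_eq_square power3_eq_cube)
qed

lemma ci4: "\<forall>r\<in>I. covd_iter X \<gamma> 4 r 0 = - 3 * (kd 1 r)\<^sup>2 - 4 * \<kappa> r * kd 2 r + (\<kappa> r)^4
   \<and> covd_iter X \<gamma> 4 r 1 = kd 3 r - 6 * (\<kappa> r)\<^sup>2 * kd 1 r"
proof
  fix r assume r: "r \<in> I"
  have da: "((\<lambda>r. - 3 * \<kappa> r * kd 1 r) has_real_derivative - 3 * (kd 1 r * kd 1 r + \<kappa> r * kd 2 r)) (at r)"
    using k0D[OF r] k1D[OF r] by (auto intro!: derivative_eq_intros simp: algebra_simps)
  have db: "((\<lambda>r. kd 2 r - (\<kappa> r)^3) has_real_derivative kd 3 r - 3 * (\<kappa> r)\<^sup>2 * kd 1 r) (at r)"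
    using k0D[OF r] k2D[OF r] by (auto intro!: derivative_eq_intros simp: algebra_simps)
  have "covd X \<gamma> (covd_iter X \<gamma> 3) r 0 = - 3 * (kd 1 r * kd 1 r + \<kappa> r * kd 2 r) - \<kappa> r * (kd 2 r - (\<kappa> r)^3) \<and>
        covd X \<gamma> (covd_iter X \<gamma> 3) r 1 = kd 3 r - 3 * (\<kappa> r)\<^sup>2 * kd 1 r + \<kappa> r * (- 3 * \<kappa> r * kd 1 r)"
    by (rule covd_step[OF r ci3 da db])
  moreover have "covd_iter X \<gamma> 4 = covd X \<gamma> (covd_iter X \<gamma> 3)" using ci_Suc[of 3] by (simp add: eval_nat_numeral)
  ultimately show "covd_iter X \<gamma> 4 r 0 = - 3 * (kd 1 r)\<^sup>2 - 4 * \<kappa> r * kd 2 r + (\<kappa> r)^4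
   \<and> covd_iter X \<gamma> 4 r 1 = kd 3 r - 6 * (\<kappa> r)\<^sup>2 * kd 1 r"
    by (simp add: algebra_simps power2_eq_square power3_eq_cube power4_eq_xxxx)
qed

lemma ci5: "\<forall>r\<in>I. covd_iter X \<gamma> 5 r 0 = - 10 * kd 1 r * kd 2 r - 5 * \<kappa> r * kd 3 r + 10 * (\<kappa> r)^3 * kd 1 r
   \<and> covd_iter X \<gamma> 5 r 1 = kd 4 r - 15 * \<kappa> r * (kd 1 r)\<^sup>2 - 10 * (\<kappa> r)\<^sup>2 * kd 2 r + (\<kappa> r)^5"
proof
  fix r assume r: "r \<in> I"
  have da: "((\<lambda>r. - 3 * (kd 1 r)\<^sup>2 - 4 * \<kappa> r * kd 2 r + (\<kappa> r)^4) has_real_derivative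
      - 6 * kd 1 r * kd 2 r - 4 * (kd 1 r * kd 2 r + \<kappa> r * kd 3 r) + 4 * (\<kappa> r)^3 * kd 1 r) (at r)"
    using k0D[OF r] k1D[OF r] k2D[OF r] by (auto intro!: derivative_eq_intros simp: algebra_simps)
  have db: "((\<lambda>r. kd 3 r - 6 * (\<kappa> r)\<^sup>2 * kd 1 r) has_real_derivative
      kd 4 r - 6 * (2 * \<kappa> r * kd 1 r * kd 1 r + (\<kappa> r)\<^sup>2 * kd 2 r)) (at r)"
    using k0D[OF r] k1D[OF r] k3D[OF r] by (auto intro!: derivative_eq_intros simp: algebra_simps)
  have "covd X \<gamma> (covd_iter X \<gamma> 4) r 0 = (- 6 * kd 1 r * kd 2 r - 4 * (kd 1 r * kd 2 r + \<kappa> r * kd 3 r) + 4 * (\<kappa> r)^3 * kd 1 r) - \<kappa> r * (kd 3 r - 6 * (\<kappa> r)\<^sup>2 * kd 1 r) \<and>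
        covd X \<gamma> (covd_iter X \<gamma> 4) r 1 = (kd 4 r - 6 * (2 * \<kappa> r * kd 1 r * kd 1 r + (\<kappa> r)\<^sup>2 * kd 2 r)) + \<kappa> r * (- 3 * (kd 1 r)\<^sup>2 - 4 * \<kappa> r * kd 2 r + (\<kappa> r)^4)"
    by (rule covd_step[OF r ci4 da db])
  moreover have "covd_iter X \<gamma> 5 = covd X \<gamma> (covd_iter X \<gamma> 4)" using ci_Suc[of 4] by (simp add: eval_nat_numeral)
  ultimately show "covd_iter X \<gamma> 5 r 0 = - 10 * kd 1 r * kd 2 r - 5 * \<kappa> r * kd 3 r + 10 * (\<kappa> r)^3 * kd 1 r
   \<and> covd_iter X \<gamma> 5 r 1 = kd 4 r - 15 * \<kappa> r * (kd 1 r)\<^sup>2 - 10 * (\<kappa> r)\<^sup>2 * kd 2 r + (\<kappa> r)^5"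
    by (simp add: algebra_simps power2_eq_square power3_eq_cube power4_eq_xxxx eval_nat_numeral)
qed


lemma riem_diag: "riemann X l i i k u v = 0"
  unfolding riemann_def by simp

lemma parseval:
  fixes v a b :: "real^3"
  assumes "a \<bullet> a = 1" "b \<bullet> b = 1" "a \<bullet> b = 0"
  shows "v \<bullet> v = (v \<bullet> a)\<^sup>2 + (v \<bullet> b)\<^sup>2 + (v \<bullet> cross3 a b)\<^sup>2"
proof -
  have g: "(v \<bullet> cross3 a b)\<^sup>2 = (a \<bullet> a) * (b \<bullet> b) * (v \<bullet> v) + 2 * (a \<bullet> b) * (b \<bullet> v) * (v \<bullet> a)
     - (a \<bullet> a) * (b \<bullet> v)\<^sup>2 - (b \<bullet> b) * (a \<bullet> v)\<^sup>2 - (v \<bullet> v) * (a \<bullet> b)\<^sup>2"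
    by (simp add: cross3_simps power2_eq_square)
  show ?thesis using g assms by (simp add: inner_commute)
qed

lemma tau_sq: assumes s: "s \<in> I" shows "(torsion \<alpha> s)\<^sup>2 = q s - (\<kappa> s)\<^sup>2"
proof -
  have t: "torsion \<alpha> s = Nd s \<bullet> cross3 (A 1 s) (N s)"
    unfolding torsion_def frenet_B_def frenet_T_def vdN[OF s] by simp
  have "q s = (Nd s \<bullet> A 1 s)\<^sup>2 + (Nd s \<bullet> N s)\<^sup>2 + (Nd s \<bullet> cross3 (A 1 s) (N s))\<^sup>2"
    unfolding q_def by (rule parseval[OF TT[OF s] NN[OF s] TN[OF s]])
  then show ?thesis unfolding t using T_Nd[OF s] N_Nd[OF s] by (simp add: inner_commute)
qed


lemma k4D: "s \<in> I \<Longrightarrow> (kd 4 has_real_derivative kd 5 s) (at s)"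
  using kd_deriv[of s 4] by (simp add: eval_nat_numeral)

lemma real_part:
  assumes c: "\<forall>r\<in>I. 5 * (kd 1 r)\<^sup>2 = c2 - 2 * c1 / \<kappa> r + (\<kappa> r)^4" and s: "s \<in> I"
  shows "- 10 * kd 1 s * kd 2 s - 5 * \<kappa> s * kd 3 s + 10 * (\<kappa> s)^3 * kd 1 s = 0"
proof -
  define G where "G r = 5 * (kd 1 r)\<^sup>2 + 10 * \<kappa> r * kd 2 r - c2 - 5 * (\<kappa> r)^4" for r
  define G1 where "G1 r = 20 * kd 1 r * kd 2 r + 10 * \<kappa> r * kd 3 r - 20 * (\<kappa> r)^3 * kd 1 r" for r
  define G2 where "G2 r = 20 * ((kd 2 r)\<^sup>2 + kd 1 r * kd 3 r) + 10 * (kd 1 r * kd 3 r + \<kappa> r * kd 4 r)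
      - 20 * (3 * (\<kappa> r)\<^sup>2 * (kd 1 r)\<^sup>2 + (\<kappa> r)^3 * kd 2 r)" for r
  have GD: "(G has_real_derivative G1 r) (at r)" if r: "r \<in> I" for r
    unfolding G_def[abs_def] G1_def using k0D[OF r] k1D[OF r] k2D[OF r]
    by (auto intro!: derivative_eq_intros simp: algebra_simps power2_eq_square power3_eq_cube)
  have G1D: "(G1 has_real_derivative G2 r) (at r)" if r: "r \<in> I" for r
    unfolding G1_def[abs_def] G2_def using k0D[OF r] k1D[OF r] k2D[OF r] k3D[OF r]
    by (auto intro!: derivative_eq_intros simp: algebra_simps power2_eq_square power3_eq_cube)
  have "G2 differentiable (at s)"
    unfolding G2_def[abs_def] using k0D[OF s] k1D[OF s] k2D[OF s] k3D[OF s] k4D[OF s]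
    by (auto intro!: derivative_eq_intros simp: real_differentiable_def)
  then obtain G3 where G2D: "(G2 has_real_derivative G3) (at s)" using real_differentiable_def by blast
  have F0: "\<forall>r\<in>I. 5 * \<kappa> r * (kd 1 r)\<^sup>2 - c2 * \<kappa> r + 2 * c1 - (\<kappa> r)^5 = 0"
  proof
    fix r assume r: "r \<in> I"
    have "\<kappa> r \<noteq> 0" using kpos r by blast
    then show "5 * \<kappa> r * (kd 1 r)\<^sup>2 - c2 * \<kappa> r + 2 * c1 - (\<kappa> r)^5 = 0"
      using c r by (auto simp: field_simps power2_eq_square power3_eq_cube eval_nat_numeral)
  qed
  have H0: "\<forall>r\<in>I. kd 1 r * G r = 0"
  proof
    fix r assume r: "r \<in> I"
    have "((\<lambda>r. 5 * \<kappa> r * (kd 1 r)\<^sup>2 - c2 * \<kappa> r + 2 * c1 - (\<kappa> r)^5) has_real_derivative kd 1 r * G r) (at r)"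
      unfolding G_def using k0D[OF r] k1D[OF r]
      by (auto intro!: derivative_eq_intros simp: algebra_simps power2_eq_square power3_eq_cube eval_nat_numeral)
    then show "kd 1 r * G r = 0" by (rule deriv_const_open[OF I_open r F0])
  qed
  have H1: "\<forall>r\<in>I. kd 2 r * G r + kd 1 r * G1 r = 0"
  proof
    fix r assume r: "r \<in> I"
    have "((\<lambda>r. kd 1 r * G r) has_real_derivative kd 2 r * G r + kd 1 r * G1 r) (at r)"
      using k1D[OF r] GD[OF r] by (auto intro!: derivative_eq_intros)
    then show "kd 2 r * G r + kd 1 r * G1 r = 0" by (rule deriv_const_open[OF I_open r H0])
  qed
  have H2: "\<forall>r\<in>I. kd 3 r * G r + 2 * kd 2 r * G1 r + kd 1 r * G2 r = 0"
  proof
    fix r assume r: "r \<in> I"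
    have "((\<lambda>r. kd 2 r * G r + kd 1 r * G1 r) has_real_derivative kd 3 r * G r + 2 * kd 2 r * G1 r + kd 1 r * G2 r) (at r)"
      using k1D[OF r] k2D[OF r] GD[OF r] G1D[OF r] by (auto intro!: derivative_eq_intros simp: algebra_simps)
    then show "kd 3 r * G r + 2 * kd 2 r * G1 r + kd 1 r * G2 r = 0" by (rule deriv_const_open[OF I_open r H1])
  qed
  have H3: "kd 4 s * G s + 3 * kd 3 s * G1 s + 3 * kd 2 s * G2 s + kd 1 s * G3 = 0"
  proof -
    have "((\<lambda>r. kd 3 r * G r + 2 * kd 2 r * G1 r + kd 1 r * G2 r) has_real_derivative
        kd 4 s * G s + 3 * kd 3 s * G1 s + 3 * kd 2 s * G2 s + kd 1 s * G3) (at s)"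
      using k1D[OF s] k2D[OF s] k3D[OF s] GD[OF s] G1D[OF s] G2D by (auto intro!: derivative_eq_intros simp: algebra_simps)
    then show ?thesis by (rule deriv_const_open[OF I_open s H2])
  qed
  have h0: "kd 1 s * G s = 0" and h1: "kd 2 s * G s + kd 1 s * G1 s = 0"
    and h2: "kd 3 s * G s + 2 * kd 2 s * G1 s + kd 1 s * G2 s = 0"
    using H0 H1 H2 s by auto
  have kp: "\<kappa> s \<noteq> 0" using kpos s by blast
  show ?thesis
  proof (cases "kd 1 s = 0")
    case False
    then have "G s = 0" using h0 by simp
    then have "G1 s = 0" using h1 False by simp
    then show ?thesis unfolding G1_def by (simp add: algebra_simps)
  next
    case True
    have g1: "G1 s = 10 * \<kappa> s * kd 3 s" unfolding G1_def True by simp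
    have "kd 3 s = 0"
    proof (cases "G s = 0")
      case False
      then have "kd 2 s = 0" using h1 True by simp
      then show ?thesis using h2 True False by simp
    next
      case G0: True
      have "kd 2 s * kd 3 s = 0" using h2 G0 True g1 kp by simp
      show ?thesis
      proof (cases "kd 2 s = 0")
        case True2: True
        then have "30 * \<kappa> s * (kd 3 s * kd 3 s) = 0" using H3 G0 True g1 by (simp add: algebra_simps)
        then show ?thesis using kp by simp
      next
        case False
        then show ?thesis using \<open>kd 2 s * kd 3 s = 0\<close> by simp
      qed
    qed
    then show ?thesis using True by simp
  qed
qed


lemma kd1: "kd 1 = deriv \<kappa>" by simp

lemma gn: "s \<in> I \<Longrightarrow> gnorm2 X (\<gamma> s) (coord_vel \<gamma> s) = 1"
  unfolding gnorm2_def sum2 cv using m00 E0 by simp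

lemma geo: "has_geodesic_curvature X I \<gamma> 1 \<kappa>"
  unfolding has_geodesic_curvature_def
proof (intro ballI allI impI)
  fix s k assume s: "s \<in> I" and k: "k < (2::nat)"
  have d: "metric_det X s 0 = 1" using mdet[OF s] E0 by simp
  have c: "covd_iter X \<gamma> 1 s 0 = 0" "covd_iter X \<gamma> 1 s 1 = \<kappa> s" using ci1 s by auto
  have "k = 0 \<or> k = 1" using k by auto
  then show "covd_iter X \<gamma> 1 s k = \<kappa> s * (1 * rotJ X (\<gamma> s) (coord_vel \<gamma> s) k)"
    unfolding rotJ_def Let_def cv using d c m00[OF s] m01[OF s] m11[OF s] E0 by auto
qed

lemma trih:
  assumes keq: "\<forall>r\<in>I. 5 * (kd 1 r)\<^sup>2 = c2 - 2 * c1 / \<kappa> r + (\<kappa> r)^4"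
    and teq: "\<forall>s\<in>I. kd 4 s - 15 * \<kappa> s * (kd 1 s)\<^sup>2 - 10 * (\<kappa> s)\<^sup>2 * kd 2 s + (\<kappa> s)^5
       - (torsion \<alpha> s)\<^sup>2 * (kd 2 s - 2 * (\<kappa> s)^3) = 0"
  shows "triharmonic_in X I \<gamma>"
  unfolding triharmonic_in_def
proof (intro conjI ballI allI impI)
  fix s assume s: "s \<in> I"
  show "gnorm2 X (\<gamma> s) (coord_vel \<gamma> s) = 1" by (rule gn[OF s])
next
  fix s k assume s: "s \<in> I" and k: "k < (2::nat)"
  have c1: "covd_iter X \<gamma> 1 s 0 = 0" "covd_iter X \<gamma> 1 s 1 = \<kappa> s" using ci1 s by auto
  have c2: "covd_iter X \<gamma> 2 s 0 = - (\<kappa> s)\<^sup>2" "covd_iter X \<gamma> 2 s 1 = kd 1 s" using ci2 s by auto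
  have c3: "covd_iter X \<gamma> 3 s 0 = - 3 * \<kappa> s * kd 1 s" "covd_iter X \<gamma> 3 s 1 = kd 2 s - (\<kappa> s)^3" using ci3 s by auto
  have c5: "covd_iter X \<gamma> 5 s 0 = - 10 * kd 1 s * kd 2 s - 5 * \<kappa> s * kd 3 s + 10 * (\<kappa> s)^3 * kd 1 s"
    "covd_iter X \<gamma> 5 s 1 = kd 4 s - 15 * \<kappa> s * (kd 1 s)\<^sup>2 - 10 * (\<kappa> s)\<^sup>2 * kd 2 s + (\<kappa> s)^5"
    using ci5 s by auto
  have co1: "curv_op X (\<gamma> s) (covd_iter X \<gamma> 3 s) (coord_vel \<gamma> s) (coord_vel \<gamma> s) l
      = riemann X l 1 0 0 s 0 * (kd 2 s - (\<kappa> s)^3)" for l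
    unfolding curv_op_def sum2 cv using c3 riem_diag by simp
  have co2: "curv_op X (\<gamma> s) (covd_iter X \<gamma> 2 s) (covd_iter X \<gamma> 1 s) (coord_vel \<gamma> s) l
      = riemann X l 0 1 0 s 0 * (- (\<kappa> s)\<^sup>2) * \<kappa> s" for l
    unfolding curv_op_def sum2 cv using c1 c2 riem_diag by simp
  have "k = 0 \<or> k = 1" using k by auto
  then show "covd_iter X \<gamma> 5 s k + curv_op X (\<gamma> s) (covd_iter X \<gamma> 3 s) (coord_vel \<gamma> s) (coord_vel \<gamma> s) k
      - curv_op X (\<gamma> s) (covd_iter X \<gamma> 2 s) (covd_iter X \<gamma> 1 s) (coord_vel \<gamma> s) k = 0"
  proof
    assume k0: "k = 0"
    show ?thesis unfolding k0 co1 co2 riem[OF s] c5 using real_part[OF keq s] by simp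
  next
    assume k1: "k = 1"
    have t: "(torsion \<alpha> s)\<^sup>2 = q s - (\<kappa> s)\<^sup>2" by (rule tau_sq[OF s])
    have "kd 4 s - 15 * \<kappa> s * (kd 1 s)\<^sup>2 - 10 * (\<kappa> s)\<^sup>2 * kd 2 s + (\<kappa> s)^5
       - (q s - (\<kappa> s)\<^sup>2) * (kd 2 s - 2 * (\<kappa> s)^3) = 0" using teq s t by simp
    then show ?thesis unfolding k1 co1 co2 riem[OF s] c5
      by (simp add: algebra_simps power2_eq_square power3_eq_cube)
  qed
qed


lemma Nd_cont: "continuous_on I Nd"
proof (rule continuous_at_imp_continuous_on, rule ballI)
  fix s assume "s \<in> I"
  then show "isCont Nd s" using Nd_diff differentiable_imp_continuous_within by blast
qed

lemma norm_N: "s \<in> I \<Longrightarrow> norm (N s) = 1"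
  using NN by (simp add: norm_eq_sqrt_inner)

lemma U_ex: "\<exists>U. open U \<and> (\<forall>s\<in>I. (s, 0) \<in> U) \<and>
    (\<forall>(s, t)\<in>U. cross3 (pd 0 X s t) (pd 1 X s t) \<noteq> 0)"
proof -
  define f where "f p = \<bar>snd p\<bar> * norm (Nd (fst p))" for p :: "real \<times> real"
  define U where "U = (I \<times> UNIV) \<inter> f -` {..<1}"
  have c0: "continuous_on (I \<times> UNIV) (\<lambda>p::real\<times>real. Nd (fst p))"
    by (rule continuous_on_compose2[OF Nd_cont continuous_on_fst]) auto
  have "continuous_on (I \<times> UNIV) f"
    unfolding f_def[abs_def] by (intro continuous_intros c0)
  then have "open U" unfolding U_def
    by (rule continuous_open_preimage[OF _ open_Times[OF I_open open_UNIV] open_lessThan])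
  moreover have "\<forall>s\<in>I. (s, 0) \<in> U" unfolding U_def f_def by simp
  moreover have "\<forall>(s, t)\<in>U. cross3 (pd 0 X s t) (pd 1 X s t) \<noteq> 0"
  proof (clarify)
    fix s t assume st: "(s, t) \<in> U" and z: "cross3 (pd 0 X s t) (pd 1 X s t) = 0"
    have s: "s \<in> I" and lt: "\<bar>t\<bar> * norm (Nd s) < 1" using st unfolding U_def f_def by auto
    have "cross3 (pd 0 X s t) (pd 1 X s t) = cross3 (A 1 s) (N s) + t *\<^sub>R cross3 (Nd s) (N s)"
      unfolding pdx0[OF s] pdx1 by (simp add: cross_add_left cross_mult_left)
    then have e: "cross3 (A 1 s) (N s) = - (t *\<^sub>R cross3 (Nd s) (N s))" using z by (simp add: eq_neg_iff_add_eq_0)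
    have nT: "norm (A 1 s) = 1" using arclen s by simp
    have "(norm (cross3 (A 1 s) (N s)))\<^sup>2 + (A 1 s \<bullet> N s)\<^sup>2 = (norm (A 1 s) * norm (N s))\<^sup>2" by (rule norm_cross_dot)
    then have "(norm (cross3 (A 1 s) (N s)))\<^sup>2 = 1" using TN[OF s] nT norm_N[OF s] by simp
    then have "norm (cross3 (A 1 s) (N s)) = 1 \<or> norm (cross3 (A 1 s) (N s)) = - 1"
      by (simp only: power2_eq_1_iff)
    then have n1: "norm (cross3 (A 1 s) (N s)) = 1"
      using norm_ge_zero[of "cross3 (A 1 s) (N s)"] by linarith
    have "(norm (cross3 (Nd s) (N s)))\<^sup>2 + (Nd s \<bullet> N s)\<^sup>2 = (norm (Nd s) * norm (N s))\<^sup>2" by (rule norm_cross_dot)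
    then have eq2: "(norm (cross3 (Nd s) (N s)))\<^sup>2 + (Nd s \<bullet> N s)\<^sup>2 = (norm (Nd s))\<^sup>2" using norm_N[OF s] by simp
    have "0 \<le> (Nd s \<bullet> N s)\<^sup>2" by (rule zero_le_power2)
    then have "(norm (cross3 (Nd s) (N s)))\<^sup>2 \<le> (norm (Nd s))\<^sup>2" using eq2 by linarith
    then have n2: "norm (cross3 (Nd s) (N s)) \<le> norm (Nd s)" by (rule power2_le_imp_le) simp
    have "1 = \<bar>t\<bar> * norm (cross3 (Nd s) (N s))" using n1 e by simp
    also have "\<dots> \<le> \<bar>t\<bar> * norm (Nd s)" using n2 by (simp add: mult_left_mono)
    finally show False using lt by simp
  qed
  ultimately show ?thesis by blast
qed

end

theorem proposition3p2:
  fixes \<alpha> :: "real \<Rightarrow> real^3" and I :: "real set"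
  assumes I: "open I" "is_interval I" "I \<noteq> {}"
    and smooth: "smooth_curve_on I \<alpha>"
    and arclen: "\<forall>s\<in>I. norm (vd \<alpha> s) = 1"
    and kpos: "\<forall>s\<in>I. curvature \<alpha> s \<noteq> 0"
    and knc: "\<not> (\<exists>c. \<forall>s\<in>I. curvature \<alpha> s = c)"
    and keq: "\<exists>c1 c2. \<forall>s\<in>I.
       5 * (deriv (curvature \<alpha>) s)\<^sup>2 = c2 - 2 * c1 / curvature \<alpha> s + (curvature \<alpha> s) ^ 4"
    and tnc: "\<not> (\<exists>c. \<forall>s\<in>I. torsion \<alpha> s = c)"
    and teq: "\<forall>s\<in>I.
       (deriv ^^ 4) (curvature \<alpha>) s
       - 15 * curvature \<alpha> s * (deriv (curvature \<alpha>) s)\<^sup>2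
       - 10 * (curvature \<alpha> s)\<^sup>2 * (deriv ^^ 2) (curvature \<alpha>) s
       + (curvature \<alpha> s) ^ 5
       - (torsion \<alpha> s)\<^sup>2 * ((deriv ^^ 2) (curvature \<alpha>) s - 2 * (curvature \<alpha> s) ^ 3) = 0"
  shows "let x = (\<lambda>s t. \<alpha> s + t *\<^sub>R frenet_N \<alpha> s); \<gamma> = (\<lambda>s. (s, 0::real)) in
     (\<exists>U. open U \<and> (\<forall>s\<in>I. (s, 0) \<in> U) \<and>
          (\<forall>(s, t)\<in>U. cross3 (pd 0 x s t) (pd 1 x s t) \<noteq> 0)) \<and>
     triharmonic_in x I \<gamma> \<and>
     (\<exists>e\<in>{-1, 1}. has_geodesic_curvature x I \<gamma> e (curvature \<alpha>)) \<and>
     \<not> (\<exists>c. \<forall>s\<in>I. curvature \<alpha> s = c)"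
proof -
  interpret curve \<alpha> I using I(1) smooth arclen kpos by unfold_locales
  obtain c1 c2 where c: "\<forall>s\<in>I. 5 * (deriv (curvature \<alpha>) s)\<^sup>2 = c2 - 2 * c1 / curvature \<alpha> s + (curvature \<alpha> s) ^ 4"
    using keq by blast
  have keq': "\<forall>r\<in>I. 5 * (kd 1 r)\<^sup>2 = c2 - 2 * c1 / \<kappa> r + (\<kappa> r)^4" using c by simp
  have teq': "\<forall>s\<in>I. kd 4 s - 15 * \<kappa> s * (kd 1 s)\<^sup>2 - 10 * (\<kappa> s)\<^sup>2 * kd 2 s + (\<kappa> s)^5
       - (torsion \<alpha> s)\<^sup>2 * (kd 2 s - 2 * (\<kappa> s)^3) = 0" using teq by simp
  have g: "\<exists>e\<in>{-1, 1::real}. has_geodesic_curvature X I \<gamma> e \<kappa>" using geo by blast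
  show ?thesis unfolding Let_def using U_ex trih[OF keq' teq'] g knc by blast
qed

end
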